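(* Let $q=2^n$, $a,b\in\mathbb{F}_{q^2}^{*}$, and $\xi(a,b)=\sum_{\lambda\in U}(-1)^{\mathrm{Tr}_1^{2n}\left(\frac{a}{\lambda+b}\right)}$. Then $$\xi(a,b)=\begin{cases}1+(-1)^{\mathrm{Tr}_1^n(a\overline{a})}q, & \text{if } b\in U \text{ and } \mathrm{Tr}_n^{2n}(a\overline{b})=0,\\ 1, & \text{if } b\in U \text{ and } \mathrm{Tr}_n^{2n}(a\overline{b})\neq0,\\ \left(1-\mathcal{K}_n\!\left(\frac{a\overline{a}}{1+b^2\overline{b}^2}\right)\right)(-1)^{\mathrm{Tr}_1^{2n}\left(\frac{\overline{a}b}{1+b\overline{b}}\right)}, & \text{if } b\in\mathbb{F}_{q^2}^{*}\setminus U.\end{cases}$$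
   Context: For $k\mid m$, $\mathrm{Tr}_k^{m}(x)=x+x^{2^k}+\cdots+x^{2^{(m/k-1)k}}$ is the trace from $\mathbb{F}_{2^m}$ to $\mathbb{F}_{2^k}$. For $x\in\mathbb{F}_{q^2}$ write $\overline{x}=x^{q}$; $U=\{\eta\in\mathbb{F}_{q^2}:\eta^{q+1}=1\}$. Division by zero uses the convention $\frac10=0$ (so the term $\lambda=b$, if $b\in U$, contributes $1$). The binary Kloosterman sum is $\mathcal{K}_n(a)=\sum_{x\in\mathbb{F}_{2^n}}(-1)^{\mathrm{Tr}_1^n(\frac1x+ax)}$. *)

theory Defs
  imports Main
begin

definition tr :: "nat \<Rightarrow> nat \<Rightarrow> 'a::field \<Rightarrow> 'a" where
  "tr k m x = (\<Sum>i<m div k. x ^ (2 ^ (i * k)))"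

text \<open>(-1)^t for t in F_2 (embedded as 0 or 1 in the field).\<close>
definition sgn1 :: "'a::field \<Rightarrow> int" where
  "sgn1 t = (if t = 0 then 1 else -1)"

definition conj2 :: "nat \<Rightarrow> 'a::field \<Rightarrow> 'a" where
  "conj2 n x = x ^ (2 ^ n)"

definition subF :: "nat \<Rightarrow> 'a::field set" where
  "subF n = {x. x ^ (2 ^ n) = x}"

definition unitU :: "nat \<Rightarrow> 'a::field set" where
  "unitU n = {eta. eta ^ (2 ^ n + 1) = 1}"

text \<open>Binary Kloosterman sum over F_{2^n} (inverse 0 = 0 as convention 1/0 = 0).\<close>
definition kloosterman :: "nat \<Rightarrow> 'a::field \<Rightarrow> int" where
  "kloosterman n a = (\<Sum>x\<in>subF n. sgn1 (tr 1 n (inverse x + a * x)))"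

text \<open>xi(a,b) = sum over lambda in U of (-1)^{Tr_1^{2n}(a/(lambda+b))}, with a/0 = 0.\<close>
definition xi :: "nat \<Rightarrow> 'a::field \<Rightarrow> 'a \<Rightarrow> int" where
  "xi n a b = (\<Sum>l\<in>unitU n. sgn1 (tr 1 (2 * n) (a / (l + b))))"

end

theory Submission
  imports Defs "HOL-Computational_Algebra.Polynomial"
begin

locale gf =
  fixes n :: nat and ty :: "'a::{field,finite} itself"
  assumes card_UNIV: "card (UNIV::'a set) = 2^(2*n)"
begin

lemma n_pos: "n \<ge> 1"
proof (rule ccontr)
  assume "\<not> n \<ge> 1"
  hence "card (UNIV::'a set) = 1" using card_UNIV by simp
  moreover have "{0::'a, 1} \<subseteq> UNIV" by simp
  hence "card {0::'a, 1} \<le> card (UNIV::'a set)" by (intro card_mono) auto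
  ultimately show False by simp
qed

lemma char2: "(1::'a) + 1 = 0"
proof (rule ccontr)
  assume h: "(1::'a) + 1 \<noteq> 0"
  have neg: "- x \<noteq> x" if "x \<noteq> 0" for x :: 'a
  proof
    assume "- x = x"
    hence "(1 + 1) * x = 0" by (simp add: distrib_right)
    thus False using h that by simp
  qed
  define C where "C = (\<lambda>x::'a. {x, -x}) ` (UNIV - {0})"
  have U: "\<Union>C = UNIV - {0}" unfolding C_def by auto
  have "2 * card C = card (\<Union>C)"
  proof (rule card_partition)
    show "finite C" unfolding C_def by simp
    show "finite (\<Union>C)" by (rule finite)
    show "card c = 2" if "c \<in> C" for c
    proof -
      from that obtain x where x: "x \<noteq> 0" "c = {x, -x}" unfolding C_def by blast
      have "x \<noteq> - x" using neg[OF x(1)] by metis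
      thus ?thesis using x(2) by simp
    qed
    have pair: "{x, -x} = {z, -z}" if "z \<in> {x, -x}" for x z :: 'a
      using that by (cases "z = x") auto
    show "c1 \<inter> c2 = {}" if "c1 \<in> C" "c2 \<in> C" "c1 \<noteq> c2" for c1 c2
    proof (rule ccontr)
      assume "c1 \<inter> c2 \<noteq> {}"
      then obtain z where z: "z \<in> c1" "z \<in> c2" by blast
      from that obtain x y where "c1 = {x, -x}" "c2 = {y, -y}" unfolding C_def by blast
      thus False using pair[of z x] pair[of z y] z that(3) by simp
    qed
  qed
  also have "\<dots> = card (UNIV::'a set) - 1" unfolding U by (simp add: card_Diff_singleton)
  finally have "2 * card C = 2^(2*n) - (1::nat)" using card_UNIV by simp
  moreover have "even ((2::nat)^(2*n))" using n_pos by simp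
  then obtain k where "(2::nat)^(2*n) = 2*k" by blast
  moreover have "(2::nat)^(2*n) > 0" by simp
  ultimately show False by presburger
qed

lemma add_self[simp]: "(x::'a) + x = 0"
proof -
  have "(1+1)*x = x + x" by (simp only: distrib_right mult_1_left)
  thus ?thesis by (simp only: char2 mult_zero_left)
qed

lemma two_zero[simp]: "(2::'a) = 0"
  by (metis char2 one_add_one)

lemma minus_eq[simp]: "- (x::'a) = x"
  by (rule add.inverse_unique[OF add_self])

lemma diff_eq_add: "(x::'a) - y = x + y"
  by (simp only: diff_conv_add_uminus minus_eq)

lemma add_eq_0_iff: "(x::'a) + y = 0 \<longleftrightarrow> x = y"
  using add.inverse_unique[of x y] add_self[of x] minus_eq[of x] by auto

lemma frob2: "((x::'a) + y)^2 = x^2 + y^2"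
proof -
  show ?thesis by (simp add: power2_sum)
qed

lemma frob: "((x::'a) + y)^(2^k) = x^(2^k) + y^(2^k)"
proof (induction k)
  case 0 then show ?case by simp
next
  case (Suc k)
  have "(x+y)^(2^Suc k) = ((x+y)^(2^k))^2" by (simp add: power_mult[symmetric] mult.commute)
  also have "\<dots> = (x^(2^k))^2 + (y^(2^k))^2" using Suc frob2 by simp
  also have "\<dots> = x^(2^Suc k) + y^(2^Suc k)" by (simp add: power_mult[symmetric] mult.commute)
  finally show ?case .
qed

lemma frob_sum: "(\<Sum>i\<in>A. f i :: 'a)^(2^k) = (\<Sum>i\<in>A. (f i)^(2^k))"
  by (induction A rule: infinite_finite_induct) (auto simp: frob)

lemma fermat1: "(x::'a) \<noteq> 0 \<Longrightarrow> x^(card (UNIV::'a set) - 1) = 1"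
proof -
  assume x0: "x \<noteq> 0"
  let ?S = "UNIV - {0::'a}"
  have P0: "(\<Prod>y\<in>?S. y) \<noteq> 0" by simp
  have "(\<Prod>y\<in>?S. x * y) = (\<Prod>y\<in>(\<lambda>y. x*y) ` ?S. y)"
    by (subst prod.reindex) (auto intro: inj_onI simp: x0)
  also have "(\<lambda>y. x*y) ` ?S = ?S"
  proof -
    have "y \<in> (\<lambda>y. x*y) ` ?S" if "y \<noteq> 0" for y
      using x0 that by (intro image_eqI[of _ _ "y/x"]) auto
    thus ?thesis using x0 by auto
  qed
  finally have "x^(card ?S) * (\<Prod>y\<in>?S. y) = (\<Prod>y\<in>?S. y)"
    by (simp add: prod.distrib)
  hence 1: "x^(card ?S) = 1" using P0 by simp
  have c: "card ?S = card (UNIV::'a set) - 1" by (rule card_Diff_singleton) (rule UNIV_I)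
  show ?thesis using 1 by (simp only: c)
qed

lemma fermat: "(x::'a)^(2^(2*n)) = x"
proof (cases "x = 0")
  case True thus ?thesis using n_pos by simp
next
  case False
  have "card (UNIV::'a set) = Suc (card (UNIV::'a set) - 1)" using card_UNIV by simp
  hence "x^card (UNIV::'a set) = x * x^(card (UNIV::'a set) - 1)" by (metis power_Suc)
  thus ?thesis using fermat1[OF False] card_UNIV by simp
qed

end

lemma card_fibers:
  assumes "finite A" "\<And>y. y \<in> f ` A \<Longrightarrow> card {x\<in>A. f x = y} = k"
  shows "card A = k * card (f ` A)"
proof -
  have "card A = (\<Sum>x\<in>A. 1::nat)" by simp
  also have "\<dots> = (\<Sum>y\<in>f ` A. \<Sum>x\<in>{x\<in>A. f x = y}. 1)"
    by (rule sum.group[symmetric]) (use assms(1) in auto)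
  also have "\<dots> = (\<Sum>y\<in>f ` A. k)" using assms(2) by (intro sum.cong) auto
  also have "\<dots> = k * card (f ` A)" by simp
  finally show ?thesis .
qed

lemma roots_bound:
  fixes p :: "'a::{field,finite} poly"
  assumes "coeff p k \<noteq> 0" "degree p \<le> d" "\<And>x. x \<in> S \<Longrightarrow> poly p x = 0"
  shows "card S \<le> d"
proof -
  have p0: "p \<noteq> 0" using assms(1) by auto
  have "card S \<le> card {x. poly p x = 0}"
    by (rule card_mono) (use assms(3) in auto)
  also have "\<dots> \<le> degree p" by (rule card_poly_roots_bound[OF p0])
  finally show ?thesis using assms(2) by simp
qed

context gf
begin

abbreviation q :: nat where "q \<equiv> 2^n"
abbreviation cj :: "'a \<Rightarrow> 'a" where "cj \<equiv> conj2 n"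
abbreviation Fq :: "'a set" where "Fq \<equiv> subF n"
abbreviation UU :: "'a set" where "UU \<equiv> unitU n"

lemma q_ge2: "q \<ge> 2"
proof -
  have "(2::nat)^1 \<le> 2^n" using n_pos by (intro power_increasing) auto
  thus ?thesis by simp
qed

lemma card_q2: "card (UNIV::'a set) = q * q"
  using card_UNIV by (simp add: power_add[symmetric] mult_2)

lemma cj_def': "cj x = x^q" by (simp add: conj2_def)

lemma cj_cj[simp]: "cj (cj x) = x"
proof -
  have "cj (cj x) = x^(q*q)" by (simp add: conj2_def power_mult)
  also have "q*q = 2^(2*n)" by (simp add: power_add[symmetric] mult_2)
  finally show ?thesis using fermat by simp
qed

lemma cj_add: "cj (x + y) = cj x + cj y" by (simp add: conj2_def frob)
lemma cj_mult: "cj (x * y) = cj x * cj y" by (simp add: conj2_def power_mult_distrib)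
lemma cj_inverse: "cj (inverse x) = inverse (cj x)" by (simp add: conj2_def power_inverse)
lemma cj_div: "cj (x / y) = cj x / cj y" by (simp add: conj2_def power_divide)
lemma cj_1[simp]: "cj 1 = 1" by (simp add: conj2_def)
lemma cj_0[simp]: "cj 0 = 0" by (simp add: conj2_def)
lemma cj_eq_0_iff[simp]: "cj x = 0 \<longleftrightarrow> x = 0" by (simp add: conj2_def)
lemma cj_pow: "cj (x^k) = (cj x)^k" by (simp add: conj2_def power_mult[symmetric] mult.commute)

lemma Fq_iff: "x \<in> Fq \<longleftrightarrow> cj x = x" by (simp add: subF_def conj2_def)
lemma U_iff: "x \<in> UU \<longleftrightarrow> x * cj x = 1"
  by (simp add: unitU_def conj2_def mult.commute)

lemma Fq_add: "x \<in> Fq \<Longrightarrow> y \<in> Fq \<Longrightarrow> x + y \<in> Fq" by (simp add: Fq_iff cj_add)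
lemma Fq_mult: "x \<in> Fq \<Longrightarrow> y \<in> Fq \<Longrightarrow> x * y \<in> Fq" by (simp add: Fq_iff cj_mult)
lemma Fq_div: "x \<in> Fq \<Longrightarrow> y \<in> Fq \<Longrightarrow> x / y \<in> Fq" by (simp add: Fq_iff cj_div)
lemma Fq_inverse: "x \<in> Fq \<Longrightarrow> inverse x \<in> Fq" by (simp add: Fq_iff cj_inverse)
lemma Fq_0: "0 \<in> Fq" by (simp add: Fq_iff)
lemma Fq_1: "1 \<in> Fq" by (simp add: Fq_iff)
lemma Fq_pow: "x \<in> Fq \<Longrightarrow> x^k \<in> Fq" by (simp add: Fq_iff cj_pow)
lemma Fq_norm: "x * cj x \<in> Fq" by (simp add: Fq_iff cj_mult mult.commute)
lemma Fq_tr: "x + cj x \<in> Fq" by (simp add: Fq_iff cj_add add.commute)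

lemma card_Fq_le: "card Fq \<le> q"
proof (rule roots_bound[where p = "monom 1 q - monom 1 1" and k = q])
  show "coeff (monom (1::'a) q - monom 1 1) q \<noteq> 0" using q_ge2 by simp
  show "degree (monom (1::'a) q - monom 1 1) \<le> q"
    using q_ge2 by (intro degree_diff_le) (auto simp: degree_monom_eq)
  show "poly (monom 1 q - monom 1 1) x = 0" if "x \<in> Fq" for x
    using that by (simp add: poly_monom subF_def)
qed

lemma card_Fq: "card Fq = q" and tr_surj: "(\<lambda>x. x + cj x) ` UNIV = Fq"
proof -
  let ?f = "\<lambda>x::'a. x + cj x"
  have im: "?f ` UNIV \<subseteq> Fq" using Fq_tr by auto
  have fib: "card {x\<in>UNIV. ?f x = y} = card Fq" if "y \<in> ?f ` UNIV" for y
  proof -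
    from that obtain x0 where y: "y = ?f x0" by blast
    have "{x\<in>UNIV. ?f x = y} = (\<lambda>t. x0 + t) ` Fq"
    proof (intro equalityI subsetI)
      fix x assume "x \<in> {x\<in>UNIV. ?f x = y}"
      hence "x + cj x = x0 + cj x0" using y by simp
      hence "cj (x + x0) = x + x0" unfolding cj_add
        by (metis add.assoc add.commute add_eq_0_iff add_self)
      hence "x + x0 \<in> Fq" by (simp add: Fq_iff)
      moreover have "x = x0 + (x + x0)" by (simp add: add.commute add.left_commute)
      ultimately show "x \<in> (\<lambda>t. x0 + t) ` Fq" by blast
    next
      fix x assume "x \<in> (\<lambda>t. x0 + t) ` Fq"
      then obtain t where "t \<in> Fq" "x = x0 + t" by blast
      thus "x \<in> {x\<in>UNIV. ?f x = y}" using y by (simp add: Fq_iff cj_add add_ac)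
    qed
    also have "card \<dots> = card Fq" by (rule card_image) (auto intro: inj_onI)
    finally show ?thesis .
  qed
  have "card (UNIV::'a set) = card Fq * card (?f ` UNIV)"
    by (rule card_fibers) (use fib in auto)
  hence eq: "q * q = card Fq * card (?f ` UNIV)" using card_q2 by simp
  have ci: "card (?f ` UNIV) \<le> card Fq" by (rule card_mono[OF _ im]) simp
  have c1: "card Fq = q"
  proof (rule ccontr)
    assume "card Fq \<noteq> q"
    hence "card Fq < q" using card_Fq_le by simp
    hence "card Fq * card (?f ` UNIV) < q * q"
      using ci by (metis le_less_trans mult_le_mono2 mult_strict_mono' zero_le)
    thus False using eq by simp
  qed
  thus "card Fq = q" .
  have "card (?f ` UNIV) = q" using eq c1 q_ge2 by simp
  thus "?f ` UNIV = Fq" using im c1 by (intro card_subset_eq) auto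
qed

end

lemma sgn1_add:
  fixes u v :: "'a::field"
  assumes "u = 0 \<or> u = 1" "v = 0 \<or> v = 1" "(1::'a) + 1 = 0"
  shows "sgn1 (u + v) = sgn1 u * sgn1 v"
  using assms by (auto simp: sgn1_def)

context gf
begin

lemma card_U_le: "card UU \<le> q + 1"
proof (rule roots_bound[where p = "monom 1 (q+1) - monom 1 0" and k = "q+1"])
  show "coeff (monom (1::'a) (q+1) - monom 1 0) (q+1) \<noteq> 0" by simp
  show "degree (monom (1::'a) (q+1) - monom 1 0) \<le> q+1"
    by (intro degree_diff_le) (auto simp: degree_monom_eq)
  show "poly (monom 1 (q+1) - monom 1 0) x = 0" if "x \<in> UU" for x
    using that by (simp add: poly_monom unitU_def)
qed

lemma U_nz: "x \<in> UU \<Longrightarrow> x \<noteq> 0" by (auto simp: U_iff)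

lemma card_U: "card UU = q + 1"
proof -
  let ?A = "UNIV - {0::'a}"
  let ?g = "\<lambda>x::'a. x * cj x"
  have im: "?g ` ?A \<subseteq> Fq - {0}" using Fq_norm by auto
  have fib: "card {x\<in>?A. ?g x = y} = card UU" if "y \<in> ?g ` ?A" for y
  proof -
    from that obtain x0 where x0: "x0 \<noteq> 0" and y: "y = ?g x0" by blast
    have "{x\<in>?A. ?g x = y} = (\<lambda>u. x0 * u) ` UU"
    proof (intro equalityI subsetI)
      fix x assume "x \<in> {x\<in>?A. ?g x = y}"
      hence x: "x \<noteq> 0" "x * cj x = x0 * cj x0" using y by auto
      have "(x / x0) * cj (x / x0) = (x * cj x) / (x0 * cj x0)" by (simp add: cj_div)
      also have "\<dots> = 1" using x x0 by simp
      finally have "x / x0 \<in> UU" by (simp add: U_iff)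
      moreover have "x = x0 * (x / x0)" using x0 by simp
      ultimately show "x \<in> (\<lambda>u. x0 * u) ` UU" by blast
    next
      fix x assume "x \<in> (\<lambda>u. x0 * u) ` UU"
      then obtain u where u: "u \<in> UU" "x = x0 * u" by blast
      have "?g x = ?g x0 * (u * cj u)" using u by (simp add: cj_mult mult_ac)
      thus "x \<in> {x\<in>?A. ?g x = y}" using u x0 y U_nz[of u] by (simp add: U_iff)
    qed
    also have "card \<dots> = card UU" by (rule card_image) (use x0 in \<open>auto intro: inj_onI\<close>)
    finally show ?thesis .
  qed
  have "card ?A = card UU * card (?g ` ?A)"
    by (rule card_fibers) (use fib in auto)
  moreover have "card ?A = q * q - 1" using card_q2 by (simp add: card_Diff_singleton)
  moreover have "card (?g ` ?A) \<le> q - 1"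
  proof -
    have "card (?g ` ?A) \<le> card (Fq - {0})" by (rule card_mono[OF _ im]) simp
    also have "\<dots> = q - 1" using card_Fq Fq_0 by (simp add: card_Diff_singleton)
    finally show ?thesis .
  qed
  ultimately have 1: "q * q - 1 \<le> card UU * (q - 1)" by (metis mult_le_mono2)
  show ?thesis
  proof (rule ccontr)
    assume "card UU \<noteq> q + 1"
    hence "card UU \<le> q" using card_U_le by simp
    hence "card UU * (q - 1) \<le> q * (q - 1)" by simp
    also have "q * (q - 1) < q * q - 1"
    proof -
      have "q * (q - 1) = q * q - q" by (simp add: diff_mult_distrib2)
      moreover have "1 < q" using q_ge2 by simp
      moreover have "1 < q * q" using q_ge2 by (metis less_le_trans mult_le_mono one_less_numeral_iff semiring_norm(76) le_square)
      ultimately show ?thesis by (metis diff_less_mono2)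
    qed
    finally show False using 1 by simp
  qed
qed

definition T :: "'a \<Rightarrow> 'a" where "T x = (\<Sum>i<n. x^(2^i))"

lemma T_def': "T x = (\<Sum>i<n. x^(2^i))" by (simp add: T_def)

lemma tr_T: "tr 1 n x = T x" by (simp add: tr_def T_def)

lemma T_add: "T (x + y) = T x + T y" by (simp add: T_def' frob sum.distrib)

lemma T_0[simp]: "T 0 = 0" by (simp add: T_def' power_0_left)

lemma T_sq: "T (x^2) = (T x)^2"
proof -
  have "(T x)^2 = (T x)^(2^1)" by simp
  also have "\<dots> = (\<Sum>i<n. (x^(2^i))^(2^1))" unfolding T_def' by (rule frob_sum)
  also have "\<dots> = T (x^2)" unfolding T_def'
    by (intro sum.cong) (simp_all add: power_mult[symmetric] mult.commute)
  finally show ?thesis by simp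
qed

lemma T_key: "(T x)^2 + x = T x + cj x"
proof -
  have A: "(T x)^2 = T (x^2)" by (rule T_sq[symmetric])
  also have "\<dots> = (\<Sum>i<n. x^(2^(Suc i)))" unfolding T_def'
    by (intro sum.cong) (simp_all add: power_mult[symmetric] mult.commute)
  finally have A: "(T x)^2 = (\<Sum>i<n. x^(2^(Suc i)))" .
  have B: "(\<Sum>i<Suc n. x^(2^i)) = x^(2^0) + (\<Sum>i<n. x^(2^(Suc i)))"
    by (rule sum.lessThan_Suc_shift)
  have C: "(\<Sum>i<Suc n. x^(2^i)) = T x + cj x" by (simp add: T_def' conj2_def)
  have "(T x)^2 + x = x^(2^0) + (\<Sum>i<n. x^(2^(Suc i)))"
    by (simp only: A power_0 power_one_right add.commute)
  thus ?thesis using B C by (simp add: add.commute)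
qed

lemma T_Fq01: "x \<in> Fq \<Longrightarrow> T x = 0 \<or> T x = 1"
proof -
  assume "x \<in> Fq"
  hence "(T x)^2 = T x" using T_key[of x] by (simp add: Fq_iff)
  hence "T x * (T x - 1) = 0" by (simp add: power2_eq_square algebra_simps)
  thus ?thesis by simp
qed

lemma T_sq_Fq: "x \<in> Fq \<Longrightarrow> T (x^2) = T x"
  using T_key[of x] by (simp add: T_sq Fq_iff)

lemma T_AS: "T (y^2 + y) = cj y + y"
proof -
  have "T (y^2 + y) = (T y)^2 + T y" by (simp add: T_add T_sq)
  also have "\<dots> = ((T y)^2 + y) + (y + T y)"
  proof -
    have "((T y)^2 + y) + (y + T y) = ((T y)^2 + T y) + (y + y)" by (simp only: add_ac)
    thus ?thesis by (simp only: add_self add_0_right)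
  qed
  also have "\<dots> = (cj y + y) + (T y + T y)" unfolding T_key by (simp only: add_ac)
  also have "\<dots> = cj y + y" by (simp only: add_self add_0_right)
  finally show ?thesis .
qed

definition KT :: "'a set" where "KT = {x\<in>Fq. T x = 0}"

lemma card_KT_le: "card KT \<le> 2^(n-1)"
proof (rule roots_bound[where p = "\<Sum>i<n. monom 1 (2^i)" and k = "2^(n-1)"])
  have "coeff (\<Sum>i<n. monom (1::'a) (2^i)) (2^(n-1)) = (\<Sum>i<n. if i = n - 1 then 1 else 0)"
    unfolding coeff_sum by (intro sum.cong) auto
  also have "\<dots> = 1" using n_pos by simp
  finally show "coeff (\<Sum>i<n. monom (1::'a) (2^i)) (2^(n-1)) \<noteq> 0" by simp
  show "degree (\<Sum>i<n. monom (1::'a) (2^i)) \<le> 2^(n-1)"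
  proof (rule degree_sum_le)
    fix i assume "i \<in> {..<n}"
    hence "(2::nat)^i \<le> 2^(n-1)" by (intro power_increasing) auto
    thus "degree (monom (1::'a) (2^i)) \<le> 2^(n-1)" by (simp add: degree_monom_eq)
  qed simp
  show "poly (\<Sum>i<n. monom 1 (2^i)) x = 0" if "x \<in> KT" for x
    using that by (simp add: poly_sum poly_monom KT_def T_def')
qed

lemma card_KT: "2 * card KT = q"
proof -
  have im: "T ` Fq \<subseteq> {0,1}" using T_Fq01 by auto
  have fib: "card {x\<in>Fq. T x = y} = card KT" if "y \<in> T ` Fq" for y
  proof -
    from that obtain x0 where x0: "x0 \<in> Fq" and y: "y = T x0" by blast
    have "{x\<in>Fq. T x = y} = (\<lambda>t. x0 + t) ` KT"
    proof (intro equalityI subsetI)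
      fix x assume "x \<in> {x\<in>Fq. T x = y}"
      hence x: "x \<in> Fq" "T x = T x0" using y by auto
      have "T (x + x0) = 0" using x by (simp add: T_add)
      moreover have "x + x0 \<in> Fq" using x x0 by (simp add: Fq_add)
      moreover have "x = x0 + (x + x0)" by (simp add: add.commute add.left_commute)
      ultimately show "x \<in> (\<lambda>t. x0 + t) ` KT" unfolding KT_def by blast
    next
      fix x assume "x \<in> (\<lambda>t. x0 + t) ` KT"
      then obtain t where "t \<in> KT" "x = x0 + t" by blast
      thus "x \<in> {x\<in>Fq. T x = y}" using y x0 by (simp add: KT_def T_add Fq_add)
    qed
    also have "card \<dots> = card KT" by (rule card_image) (auto intro: inj_onI)
    finally show ?thesis .
  qed
  have "card Fq = card KT * card (T ` Fq)"
    by (rule card_fibers) (use fib in auto)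
  hence eq: "q = card KT * card (T ` Fq)" using card_Fq by simp
  have "card (T ` Fq) \<le> card {0::'a,1}" by (rule card_mono[OF _ im]) simp
  hence ci: "card (T ` Fq) \<le> 2" by simp
  have q2: "q = 2^(n-1) * 2" using n_pos by (cases n) auto
  show ?thesis
  proof (rule ccontr)
    assume "2 * card KT \<noteq> q"
    hence "card KT < 2^(n-1)" using card_KT_le q2 by auto
    have "card KT * card (T ` Fq) \<le> card KT * 2" by (rule mult_le_mono2[OF ci])
    also have "\<dots> < 2^(n-1) * 2" using \<open>card KT < 2^(n-1)\<close> by simp
    finally have "card KT * card (T ` Fq) < 2^(n-1) * 2" .
    thus False using eq q2 by simp
  qed
qed

lemma card_T1: "2 * card {x\<in>Fq. T x = 1} = q"
proof -
  have "{x\<in>Fq. T x = 1} = Fq - KT" using T_Fq01 by (auto simp: KT_def)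
  hence "card {x\<in>Fq. T x = 1} = card Fq - card KT"
    by (simp add: card_Diff_subset KT_def)
  thus ?thesis using card_KT card_Fq by simp
qed

lemma sum_sgnT: "(\<Sum>s\<in>Fq. sgn1 (T s)) = 0"
proof -
  have sub: "KT \<subseteq> Fq" by (auto simp: KT_def)
  have "(\<Sum>s\<in>Fq. sgn1 (T s)) = (\<Sum>s\<in>Fq - KT. sgn1 (T s)) + (\<Sum>s\<in>KT. sgn1 (T s))"
    by (rule sum.subset_diff[OF sub]) simp
  also have "(\<Sum>s\<in>KT. sgn1 (T s)) = (\<Sum>s\<in>KT. 1)" by (intro sum.cong) (auto simp: KT_def sgn1_def)
  also have "(\<Sum>s\<in>Fq - KT. sgn1 (T s)) = (\<Sum>s\<in>Fq - KT. -1)"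
    by (intro sum.cong) (auto simp: KT_def sgn1_def)
  finally have 1: "(\<Sum>s\<in>Fq. sgn1 (T s)) = (\<Sum>s\<in>Fq - KT. -1) + (\<Sum>s\<in>KT. 1)" .
  have "card (Fq - KT) = card KT" using card_KT card_Fq sub
    by (simp add: card_Diff_subset)
  thus ?thesis using 1 by simp
qed

lemma mult_image_Fq: "d \<in> Fq \<Longrightarrow> d \<noteq> 0 \<Longrightarrow> (\<lambda>t. d * t) ` Fq = Fq"
  by (rule endo_inj_surj) (auto intro: inj_onI simp: Fq_mult)

lemma char_sum: "d \<in> Fq \<Longrightarrow> (\<Sum>t\<in>Fq. sgn1 (T (d * t))) = (if d = 0 then int q else 0)"
proof (cases "d = 0")
  case True thus ?thesis by (simp add: sgn1_def card_Fq)
next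
  case False
  assume d: "d \<in> Fq"
  have inj: "inj_on (\<lambda>t. d * t) Fq" using False by (auto intro: inj_onI)
  have "(\<Sum>t\<in>Fq. sgn1 (T (d * t))) = (\<Sum>s\<in>(\<lambda>t. d * t) ` Fq. sgn1 (T s))"
    using sum.reindex[OF inj, of "\<lambda>s. sgn1 (T s)"] by (simp add: comp_def)
  also have "\<dots> = (\<Sum>s\<in>Fq. sgn1 (T s))" by (simp only: mult_image_Fq[OF d False])
  also have "\<dots> = 0" by (rule sum_sgnT)
  finally have "(\<Sum>t\<in>Fq. sgn1 (T (d * t))) = 0" .
  moreover have "(if d = 0 then int q else 0) = 0" using False by (simp only: if_False)
  ultimately show ?thesis by (simp only:)
qed

end

lemma sum_lessThan_add_nat: "(\<Sum>i<n+m. f i) = (\<Sum>i<n. f i) + (\<Sum>i<m. f (n + i))"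
  for f :: "nat \<Rightarrow> 'b::comm_monoid_add"
  by (induction m) (simp_all add: add_ac)

context gf
begin

lemma tr2_T: "tr 1 (2*n) x = T (x + cj x)"
proof -
  have "tr 1 (2*n) x = (\<Sum>i<n+n. x^(2^i))" by (simp add: tr_def mult_2)
  also have "\<dots> = T x + (\<Sum>i<n. x^(2^(n+i)))" by (simp add: sum_lessThan_add_nat T_def')
  also have "(\<Sum>i<n. x^(2^(n+i))) = T (cj x)"
    unfolding T_def' conj2_def by (intro sum.cong) (simp_all add: power_add power_mult)
  finally show ?thesis by (simp add: T_add)
qed

lemma trR: "tr n (2*n) (x::'a) = x + cj x"
proof -
  have "2 * n div n = 2" using n_pos by simp
  thus ?thesis by (simp add: tr_def conj2_def numeral_2_eq_2)
qed

lemma tr2_cj: "tr 1 (2*n) (cj x) = tr 1 (2*n) x"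
  unfolding tr2_T by (simp add: add.commute)

lemma tr2_01: "tr 1 (2*n) (x::'a) = 0 \<or> tr 1 (2*n) x = 1"
  unfolding tr2_T by (rule T_Fq01[OF Fq_tr])

lemma sgn1_T_add: "x \<in> Fq \<Longrightarrow> y \<in> Fq \<Longrightarrow> sgn1 (T (x + y)) = sgn1 (T x) * sgn1 (T y)"
  unfolding T_add by (rule sgn1_add[OF T_Fq01 T_Fq01 char2])

lemma caseU:
  assumes a0: "a \<noteq> 0" and bU: "b \<in> UU"
  shows "xi n a b = (if tr n (2*n) (a * cj b) = 0 then 1 + sgn1 (T (a * cj a)) * int q else 1)"
proof -
  let ?g = "\<lambda>x. sgn1 (tr 1 (2*n) x)"
  have b0: "b \<noteq> 0" using bU U_nz by blast
  have bcb: "b * cj b = 1" using bU U_iff by blast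
  hence cjb: "cj b = inverse b" using b0 by (metis inverse_unique)
  define e where "e = a * cj b"
  define T1 where "T1 = {z::'a. z + cj z = 1}"
  have "xi n a b = (\<Sum>l\<in>UU. ?g (a / (l + b)))" by (simp add: xi_def)
  also have "\<dots> = ?g (a / (b + b)) + (\<Sum>l\<in>UU - {b}. ?g (a / (l + b)))"
    by (rule sum.remove[OF _ bU]) simp
  also have "?g (a / (b + b)) = 1" by (simp add: sgn1_def tr_def power_0_left)
  also have "(\<Sum>l\<in>UU - {b}. ?g (a / (l + b))) = (\<Sum>z\<in>T1. ?g (e * z))"
  proof (rule sum.reindex_bij_witness[where j = "\<lambda>l. b / (l + b)" and i = "\<lambda>z. b / z + b"])
    fix l assume l: "l \<in> UU - {b}"
    have lb: "l + b \<noteq> 0" using l by (simp add: add_eq_0_iff)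
    have l0: "l \<noteq> 0" using l U_nz by blast
    show "b / (b / (l + b)) + b = l" using lb b0 by simp
    have cjl: "cj l = inverse l" using l U_iff l0 by (metis inverse_unique DiffD1)
    have "cj (b / (l + b)) = inverse b / (inverse l + inverse b)" by (simp add: cj_div cj_add cjb cjl)
    also have "\<dots> = l / (l + b)" using l0 b0 lb by (simp add: field_simps)
    finally have "b / (l + b) + cj (b / (l + b)) = (b + l) / (l + b)" by (simp add: add_divide_distrib)
    also have "\<dots> = 1" using lb by (simp add: add.commute)
    finally show "b / (l + b) \<in> T1" unfolding T1_def by simp
    have "e * (b / (l + b)) = a * (b * cj b) / (l + b)" unfolding e_def by (simp add: field_simps)
    also have "\<dots> = a / (l + b)" using bcb by simp
    finally show "?g (e * (b / (l + b))) = ?g (a / (l + b))" by (rule arg_cong[where f = ?g])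
  next
    fix z assume z: "z \<in> T1"
    hence zz: "z + cj z = 1" unfolding T1_def by simp
    have "(z + cj z) + z = cj z + (z + z)" by (simp only: add_ac)
    hence cz: "cj z = z + 1" using zz by (simp add: add.commute)
    have z0: "z \<noteq> 0" using zz by auto
    have "cj z \<noteq> 0" using z0 by simp
    hence z1: "z + 1 \<noteq> 0" using cz by simp
    show "b / (b / z + b + b) = z" using b0 z0 by simp
    have "(b / z + b) * cj (b / z + b) = (b * cj b) * ((1 + z) * (1 + cj z)) / (z * cj z)"
      using z0 by (simp add: cj_add cj_div cj_mult field_simps)
    also have "\<dots> = 1"
    proof -
      have e1: "1 + z = cj z" using cz by (simp add: add.commute)
      have e2: "1 + cj z = z" using cz by (simp add: add_ac)
      have nz: "z * cj z \<noteq> 0" using z0 by simp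
      show ?thesis unfolding e1 e2 bcb using nz by (simp add: mult.commute)
    qed
    finally have "b / z + b \<in> UU" by (simp add: U_iff)
    moreover have "b / z + b \<noteq> b" using b0 z0 by simp
    ultimately show "b / z + b \<in> UU - {b}" by simp
  qed
  finally have xi1: "xi n a b = 1 + (\<Sum>z\<in>T1. ?g (e * z))" .
  obtain z0 where z0: "z0 + cj z0 = 1" using tr_surj Fq_1 by (metis (no_types, lifting) imageE)
  have T1eq: "T1 = (\<lambda>t. z0 + t) ` Fq"
  proof (intro equalityI subsetI)
    fix z assume "z \<in> T1"
    hence zz: "z + cj z = 1" unfolding T1_def by simp
    have "cj (z + z0) = (z + cj z) + (z0 + cj z0) + (z + z0)"
    proof -
      have "(z + cj z) + (z0 + cj z0) + (z + z0) = (cj z + cj z0) + (z + z) + (z0 + z0)"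
        by (simp only: add_ac)
      thus ?thesis by (simp add: cj_add)
    qed
    hence "cj (z + z0) = z + z0" using zz z0 by simp
    hence "z + z0 \<in> Fq" by (simp add: Fq_iff)
    moreover have "z = z0 + (z + z0)" by (simp add: add_ac)
    ultimately show "z \<in> (\<lambda>t. z0 + t) ` Fq" by blast
  next
    fix z assume "z \<in> (\<lambda>t. z0 + t) ` Fq"
    then obtain t where t: "t \<in> Fq" "z = z0 + t" by blast
    have "z + cj z = (z0 + cj z0) + (t + t)" using t by (simp add: cj_add Fq_iff add_ac)
    thus "z \<in> T1" unfolding T1_def using z0 by simp
  qed
  define d where "d = e + cj e"
  define w0 where "w0 = e * z0 + cj (e * z0)"
  have dF: "d \<in> Fq" unfolding d_def by (rule Fq_tr)
  have wF: "w0 \<in> Fq" unfolding w0_def by (rule Fq_tr)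
  have "(\<Sum>z\<in>T1. ?g (e * z)) = (\<Sum>t\<in>Fq. ?g (e * (z0 + t)))"
    unfolding T1eq by (subst sum.reindex) (auto intro: inj_onI)
  also have "\<dots> = (\<Sum>t\<in>Fq. sgn1 (T w0) * sgn1 (T (d * t)))"
  proof (intro sum.cong refl)
    fix t assume t: "t \<in> Fq"
    have "e * (z0 + t) + cj (e * (z0 + t)) = w0 + d * t"
      using t unfolding w0_def d_def by (simp add: cj_add cj_mult Fq_iff algebra_simps)
    hence "?g (e * (z0 + t)) = sgn1 (T (w0 + d * t))" unfolding tr2_T by simp
    also have "\<dots> = sgn1 (T w0) * sgn1 (T (d * t))"
      by (rule sgn1_T_add[OF wF Fq_mult[OF dF t]])
    finally show "?g (e * (z0 + t)) = sgn1 (T w0) * sgn1 (T (d * t))" .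
  qed
  also have "\<dots> = sgn1 (T w0) * (\<Sum>t\<in>Fq. sgn1 (T (d * t)))" by (simp add: sum_distrib_left)
  also have "\<dots> = sgn1 (T w0) * (if d = 0 then int q else 0)" by (simp only: char_sum[OF dF])
  finally have S: "(\<Sum>z\<in>T1. ?g (e * z)) = sgn1 (T w0) * (if d = 0 then int q else 0)" .
  have dtr: "tr n (2*n) (a * cj b) = d" unfolding trR d_def e_def ..
  show ?thesis
  proof (cases "d = 0")
    case False thus ?thesis using xi1 S dtr by simp
  next
    case True
    hence ce: "cj e = e" unfolding d_def by (simp add: add_eq_0_iff)
    hence eF: "e \<in> Fq" by (simp add: Fq_iff)
    have "w0 = e * (z0 + cj z0)" unfolding w0_def by (simp add: cj_mult ce algebra_simps)
    hence w0e: "w0 = e" using z0 by simp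
    have "e * cj e = a * cj a * (b * cj b)" unfolding e_def by (simp add: cj_mult mult_ac)
    hence "a * cj a = e^2" using bcb ce by (simp add: power2_eq_square)
    hence "T (a * cj a) = T w0" using T_sq_Fq[OF eF] w0e by simp
    thus ?thesis using xi1 S dtr True by simp
  qed
qed

end

context gf
begin

lemma sq_inj: "(x::'a)^2 = y^2 \<Longrightarrow> x = y"
proof -
  assume "x^2 = y^2"
  hence "(x + y)^2 = 0" by (simp add: frob2)
  hence "x + y = 0" by simp
  thus "x = y" by (simp add: add_eq_0_iff)
qed

lemma sqrt_ex: "A \<in> Fq \<Longrightarrow> \<exists>r\<in>Fq. r^2 = A"
proof -
  assume A: "A \<in> Fq"
  have "(\<lambda>x. x^2) ` Fq = Fq"
    by (rule endo_inj_surj) (auto intro: inj_onI sq_inj simp: Fq_pow)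
  thus ?thesis using A by (metis imageE)
qed

lemma invsq_bij: "A \<in> Fq \<Longrightarrow> A \<noteq> 0 \<Longrightarrow> inj_on (\<lambda>t. A / t^2) (Fq - {0}) \<and> (\<lambda>t. A / t^2) ` (Fq - {0}) = Fq - {0}"
proof -
  assume A: "A \<in> Fq" "A \<noteq> 0"
  have inj: "inj_on (\<lambda>t. A / t^2) (Fq - {0})"
  proof (rule inj_onI)
    fix s t assume st: "s \<in> Fq - {0}" "t \<in> Fq - {0}" "A / s^2 = A / t^2"
    hence "s^2 = t^2" using A by (simp add: field_simps)
    thus "s = t" by (rule sq_inj)
  qed
  moreover have "(\<lambda>t. A / t^2) ` (Fq - {0}) = Fq - {0}"
    by (rule endo_inj_surj[OF _ _ inj]) (use A in \<open>auto simp: Fq_div Fq_pow\<close>)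
  ultimately show ?thesis by blast
qed

lemma S_lemma:
  assumes c0: "c \<noteq> 0"
  shows "(\<Sum>\<eta>\<in>UU. sgn1 (tr 1 (2*n) (c * \<eta>))) = 1 - kloosterman n (c * cj c)"
proof -
  define A where "A = c * cj c"
  have AF: "A \<in> Fq" unfolding A_def by (rule Fq_norm)
  have A0: "A \<noteq> 0" unfolding A_def using c0 by simp
  define C where "C = {u. u * cj u = A}"
  define m where "m t = card {u\<in>C. u + cj u = t}" for t
  have CU: "C = (\<lambda>e. c * e) ` UU"
  proof (intro equalityI subsetI)
    fix u assume "u \<in> C"
    hence "u * cj u = A" by (simp add: C_def)
    hence "(u / c) * cj (u / c) = 1" using c0 unfolding A_def by (simp add: cj_div field_simps)
    hence "u / c \<in> UU" by (simp add: U_iff)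
    moreover have "u = c * (u / c)" using c0 by simp
    ultimately show "u \<in> (\<lambda>e. c * e) ` UU" by blast
  next
    fix u assume "u \<in> (\<lambda>e. c * e) ` UU"
    then obtain e where e: "e \<in> UU" "u = c * e" by blast
    have "u * cj u = A * (e * cj e)" unfolding A_def e(2) by (simp add: cj_mult mult_ac)
    thus "u \<in> C" using e(1) by (simp add: C_def U_iff)
  qed
  have cardC: "card C = q + 1"
    unfolding CU using c0 card_U by (subst card_image) (auto intro: inj_onI)
  have finC: "finite C" by simp
  have "(\<Sum>\<eta>\<in>UU. sgn1 (tr 1 (2*n) (c * \<eta>))) = (\<Sum>u\<in>C. sgn1 (T (u + cj u)))"
    unfolding CU tr2_T by (subst sum.reindex) (use c0 in \<open>auto intro: inj_onI\<close>)
  also have "\<dots> = (\<Sum>t\<in>Fq. \<Sum>u\<in>{u\<in>C. u + cj u = t}. sgn1 (T (u + cj u)))"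
    by (rule sum.group[symmetric]) (auto simp: Fq_tr)
  also have "\<dots> = (\<Sum>t\<in>Fq. sgn1 (T t) * int (m t))"
    unfolding m_def by (intro sum.cong refl) simp
  finally have S1: "(\<Sum>\<eta>\<in>UU. sgn1 (tr 1 (2*n) (c * \<eta>))) = (\<Sum>t\<in>Fq. sgn1 (T t) * int (m t))" .
  obtain r where r: "r \<in> Fq" "r^2 = A" using sqrt_ex[OF AF] by blast
  have m0: "m 0 = 1"
  proof -
    have "{u\<in>C. u + cj u = 0} = {r}"
    proof (intro equalityI subsetI)
      fix u assume "u \<in> {u\<in>C. u + cj u = 0}"
      hence u: "u * cj u = A" "u + cj u = 0" by (auto simp: C_def)
      hence "cj u = u" by (simp add: add_eq_0_iff)
      hence "u^2 = r^2" using u r by (simp add: power2_eq_square)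
      thus "u \<in> {r}" using sq_inj by blast
    next
      fix u assume "u \<in> {r}"
      hence "u = r" by simp
      thus "u \<in> {u\<in>C. u + cj u = 0}" using r by (simp add: C_def Fq_iff power2_eq_square)
    qed
    thus ?thesis by (simp add: m_def)
  qed
  have quad: "v^2 + t * v + A = 0" if "v \<in> C" "v + cj v = t" for v t
  proof -
    from that have tA: "t = v + cj v" "A = v * cj v" by (auto simp: C_def)
    have "v^2 + t * v + A = (v * v + v * v) + (cj v * v + v * cj v)"
      unfolding tA by (simp add: algebra_simps power2_eq_square)
    also have "\<dots> = 0" by (simp add: mult.commute)
    finally show ?thesis .
  qed
  have fibI: "{v\<in>C. v + cj v = t} = {u, cj u} \<and> u \<noteq> cj u \<and> T (A / t^2) = 1"
    if t: "t \<in> Fq" "t \<noteq> 0" and u: "u \<in> C" "u + cj u = t" for t u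
  proof (intro conjI)
    show ne: "u \<noteq> cj u" using t u by auto
    have ct: "cj t = t" using t by (simp add: Fq_iff)
    show "{v\<in>C. v + cj v = t} = {u, cj u}"
    proof (intro equalityI subsetI)
      fix v assume "v \<in> {v\<in>C. v + cj v = t}"
      hence v: "v \<in> C" "v + cj v = t" by auto
      have qu: "u^2 + t * u + A = 0" by (rule quad[OF u])
      have qv: "v^2 + t * v + A = 0" by (rule quad[OF v])
      have "(u + v) * (u + v + t) = (u^2 + t * u + A) + (v^2 + t * v + A)"
        by (simp add: algebra_simps power2_eq_square)
      hence "(u + v) * (u + v + t) = 0" using qu qv by simp
      hence "u + v = 0 \<or> u + v + t = 0" by simp
      hence "v = u \<or> v = u + t" by (auto simp: add_eq_0_iff)
      moreover have "u + t = cj u" using u(2) by (auto simp: add.assoc[symmetric])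
      ultimately show "v \<in> {u, cj u}" by auto
    next
      fix v assume "v \<in> {u, cj u}"
      moreover have "cj u \<in> C" using u by (simp add: C_def mult.commute)
      moreover have "cj u + cj (cj u) = t" using u by (simp add: add.commute)
      ultimately show "v \<in> {v\<in>C. v + cj v = t}" using u by auto
    qed
    have "(u / t)^2 + u / t = (u^2 + t * u) / t^2" using t by (simp add: field_simps power2_eq_square)
    also have "u^2 + t * u = A" using quad[OF u] by (simp add: add_eq_0_iff)
    finally have "T (A / t^2) = T ((u/t)^2 + u/t)" by simp
    also have "\<dots> = cj (u / t) + u / t" by (rule T_AS)
    also have "\<dots> = (cj u + u) / t" by (simp add: cj_div ct add_divide_distrib)
    also have "\<dots> = 1" using u t by (simp add: add.commute)
    finally show "T (A / t^2) = 1" .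
  qed
  define P where "P = {t\<in>Fq - {0}. {u\<in>C. u + cj u = t} \<noteq> {}}"
  define Q where "Q = {t\<in>Fq - {0}. T (A / t^2) = 1}"
  have PQ: "P \<subseteq> Q" unfolding P_def Q_def using fibI by blast
  have mP: "m t = (if t \<in> P then 2 else 0)" if "t \<in> Fq - {0}" for t
  proof (cases "t \<in> P")
    case True
    then obtain u where "u \<in> C" "u + cj u = t" unfolding P_def by blast
    hence "{v\<in>C. v + cj v = t} = {u, cj u}" "u \<noteq> cj u" using fibI that by blast+
    thus ?thesis using True by (simp add: m_def)
  next
    case False
    hence "{u\<in>C. u + cj u = t} = {}" using that unfolding P_def by blast
    thus ?thesis using False by (simp add: m_def)
  qed
  have "card C = (\<Sum>u\<in>C. 1::nat)" by simp
  also have "\<dots> = (\<Sum>t\<in>Fq. \<Sum>u\<in>{u\<in>C. u + cj u = t}. 1)"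
    by (rule sum.group[symmetric]) (auto simp: Fq_tr)
  also have "\<dots> = (\<Sum>t\<in>Fq. m t)" unfolding m_def by simp
  also have "\<dots> = m 0 + (\<Sum>t\<in>Fq - {0}. m t)" by (rule sum.remove[OF _ Fq_0]) simp
  also have "(\<Sum>t\<in>Fq - {0}. m t) = (\<Sum>t\<in>Fq - {0}. if t \<in> P then 2 else 0)"
    using mP by (intro sum.cong) auto
  also have "\<dots> = (\<Sum>t\<in>{t\<in>Fq - {0}. t \<in> P}. 2)" by (rule sum.inter_filter[symmetric]) simp
  also have "{t\<in>Fq - {0}. t \<in> P} = P" unfolding P_def by blast
  finally have "q + 1 = 1 + 2 * card P" using cardC m0 by simp
  hence cP: "2 * card P = q" by simp
  have cQ: "card Q = card {s\<in>Fq. T s = 1}"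
  proof -
    obtain inj: "inj_on (\<lambda>t. A / t^2) (Fq - {0})" and im: "(\<lambda>t. A / t^2) ` (Fq - {0}) = Fq - {0}"
      using invsq_bij[OF AF A0] by blast
    have "(\<lambda>t. A / t^2) ` Q = {s\<in>Fq. T s = 1}"
    proof (intro equalityI subsetI)
      fix s assume "s \<in> (\<lambda>t. A / t^2) ` Q"
      then obtain t where "t \<in> Q" "s = A / t^2" by blast
      thus "s \<in> {s\<in>Fq. T s = 1}" using im unfolding Q_def by blast
    next
      fix s assume s: "s \<in> {s\<in>Fq. T s = 1}"
      hence "s \<noteq> 0" by auto
      hence "s \<in> (\<lambda>t. A / t^2) ` (Fq - {0})" using s im by auto
      then obtain t where "t \<in> Fq - {0}" "s = A / t^2" by blast
      thus "s \<in> (\<lambda>t. A / t^2) ` Q" using s unfolding Q_def by auto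
    qed
    moreover have "inj_on (\<lambda>t. A / t^2) Q" by (rule inj_on_subset[OF inj]) (auto simp: Q_def)
    ultimately show ?thesis by (metis card_image)
  qed
  have PeqQ: "P = Q"
    by (rule card_subset_eq) (use PQ cP cQ card_T1 in \<open>auto simp: Q_def\<close>)
  have mQ: "int (m t) = 1 - sgn1 (T (A / t^2))" if "t \<in> Fq - {0}" for t
  proof -
    have "A / t^2 \<in> Fq" using that AF by (simp add: Fq_div Fq_pow)
    hence "T (A / t^2) = 0 \<or> T (A / t^2) = 1" by (rule T_Fq01)
    thus ?thesis using mP[OF that] PeqQ that unfolding Q_def by (auto simp: sgn1_def)
  qed
  have "(\<Sum>t\<in>Fq. sgn1 (T t) * int (m t)) = sgn1 (T 0) * int (m 0) + (\<Sum>t\<in>Fq - {0}. sgn1 (T t) * int (m t))"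
    by (rule sum.remove[OF _ Fq_0]) simp
  also have "(\<Sum>t\<in>Fq - {0}. sgn1 (T t) * int (m t)) = (\<Sum>t\<in>Fq - {0}. sgn1 (T t) - sgn1 (T (t^2 + A / t^2)))"
  proof (intro sum.cong refl)
    fix t assume t: "t \<in> Fq - {0}"
    have "sgn1 (T (t^2 + A / t^2)) = sgn1 (T (t^2)) * sgn1 (T (A / t^2))"
      using t AF by (intro sgn1_T_add) (auto simp: Fq_div Fq_pow)
    also have "T (t^2) = T t" using t by (simp add: T_sq_Fq)
    finally have e: "sgn1 (T (t^2 + A / t^2)) = sgn1 (T t) * sgn1 (T (A / t^2))" .
    show "sgn1 (T t) * int (m t) = sgn1 (T t) - sgn1 (T (t^2 + A / t^2))"
      unfolding e mQ[OF t] by (simp add: right_diff_distrib)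
  qed
  also have "\<dots> = (\<Sum>t\<in>Fq - {0}. sgn1 (T t)) - (\<Sum>t\<in>Fq - {0}. sgn1 (T (t^2 + A / t^2)))"
    by (rule sum_subtractf)
  also have "(\<Sum>t\<in>Fq - {0}. sgn1 (T t)) = -1"
  proof -
    have "(\<Sum>t\<in>Fq. sgn1 (T t)) = sgn1 (T 0) + (\<Sum>t\<in>Fq - {0}. sgn1 (T t))"
      by (rule sum.remove[OF _ Fq_0]) simp
    thus ?thesis using sum_sgnT by (simp add: sgn1_def)
  qed
  also have "(\<Sum>t\<in>Fq - {0}. sgn1 (T (t^2 + A / t^2))) = kloosterman n A - 1"
  proof -
    obtain inj: "inj_on (\<lambda>t. 1 / t^2) (Fq - {0})" and im: "(\<lambda>t. 1 / t^2) ` (Fq - {0}) = Fq - {0}"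
      using invsq_bij[OF Fq_1] by auto
    have "kloosterman n A = (\<Sum>x\<in>Fq. sgn1 (T (inverse x + A * x)))"
      unfolding kloosterman_def tr_T by (rule refl)
    also have "\<dots> = sgn1 (T (inverse 0 + A * 0)) + (\<Sum>x\<in>Fq - {0}. sgn1 (T (inverse x + A * x)))"
      by (rule sum.remove[OF _ Fq_0]) simp
    also have "sgn1 (T (inverse 0 + A * 0)) = 1" by (simp add: sgn1_def)
    also have "(\<Sum>x\<in>Fq - {0}. sgn1 (T (inverse x + A * x))) = (\<Sum>x\<in>(\<lambda>t. 1 / t^2) ` (Fq - {0}). sgn1 (T (inverse x + A * x)))"
      by (simp only: im)
    also have "\<dots> = (\<Sum>t\<in>Fq - {0}. sgn1 (T (inverse (1 / t^2) + A * (1 / t^2))))"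
      by (rule sum.reindex[OF inj, unfolded comp_def])
    also have "\<dots> = (\<Sum>t\<in>Fq - {0}. sgn1 (T (t^2 + A / t^2)))"
      by (intro sum.cong refl) (simp add: field_simps)
    finally show ?thesis by simp
  qed
  finally show ?thesis using S1 m0 unfolding A_def by (simp add: sgn1_def)
qed

end

context gf
begin

lemma caseNU:
  assumes a0: "a \<noteq> 0" and b0: "b \<noteq> 0" and bU: "b \<notin> UU"
  shows "xi n a b = (1 - kloosterman n (a * cj a / (1 + b^2 * (cj b)^2)))
          * sgn1 (tr 1 (2*n) (cj a * b / (1 + b * cj b)))"
proof -
  let ?g = "\<lambda>x. sgn1 (tr 1 (2*n) x)"
  define N where "N = 1 + b * cj b"
  have bcb: "b * cj b \<noteq> 1" using bU by (simp add: U_iff)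
  have N0: "N \<noteq> 0"
  proof
    assume "N = 0"
    hence "1 = b * cj b" unfolding N_def by (simp only: add_eq_0_iff)
    thus False using bcb by simp
  qed
  have cN: "cj N = N" unfolding N_def by (simp add: cj_add cj_mult mult.commute)
  define phi where "phi l = (1 + cj b * l) / (l + b)" for l
  have lb: "l + b \<noteq> 0" if "l \<in> UU" for l using that bU by (auto simp: add_eq_0_iff)
  have den2: "1 + cj b * l \<noteq> 0" if l: "l \<in> UU" for l
  proof
    assume "1 + cj b * l = 0"
    hence "1 = cj b * l" by (simp only: add_eq_0_iff)
    hence h: "cj b * l = 1" by (rule sym)
    hence "cj (cj b * l) = 1" by simp
    hence "b * cj l = 1" by (simp add: cj_mult)
    hence "(cj b * l) * (b * cj l) = 1" using h by simp
    hence "(b * cj b) * (l * cj l) = 1" by (simp add: mult_ac)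
    thus False using l bcb by (simp add: U_iff)
  qed
  have phiU: "phi l \<in> UU" if l: "l \<in> UU" for l
  proof -
    have l0: "l \<noteq> 0" using l U_nz by blast
    have cjl: "cj l = inverse l" using l U_iff l0 by (metis inverse_unique)
    have "cj (phi l) = (1 + b * inverse l) / (inverse l + cj b)"
      unfolding phi_def by (simp add: cj_div cj_add cj_mult cjl)
    also have "\<dots> = ((l + b) / l) / ((1 + cj b * l) / l)"
    proof -
      have "1 + b * inverse l = (l + b) / l" using l0 by (simp add: field_simps)
      moreover have "inverse l + cj b = (1 + cj b * l) / l" using l0 by (simp add: field_simps)
      ultimately show ?thesis by simp
    qed
    also have "\<dots> = (l + b) / (1 + cj b * l)" using l0 by simp
    finally have "phi l * cj (phi l) = ((1 + cj b * l) / (l + b)) * ((l + b) / (1 + cj b * l))"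
      unfolding phi_def by simp
    also have "\<dots> = 1" using lb[OF l] den2[OF l] by simp
    finally show ?thesis by (simp add: U_iff)
  qed
  have inj: "inj_on phi UU"
  proof (rule inj_onI)
    fix l m assume l: "l \<in> UU" and m: "m \<in> UU" and eq: "phi l = phi m"
    hence "(1 + cj b * l) * (m + b) = (1 + cj b * m) * (l + b)"
      unfolding phi_def using lb[OF l] lb[OF m] by (simp add: frac_eq_eq)
    moreover have "(m + l) * N = (1 + cj b * l) * (m + b) + (1 + cj b * m) * (l + b)"
      unfolding N_def by (simp add: algebra_simps)
    ultimately have "(m + l) * N = 0" by simp
    hence "m + l = 0" using N0 by simp
    thus "l = m" by (simp add: add_eq_0_iff)
  qed
  have im: "phi ` UU = UU" by (rule endo_inj_surj[OF _ _ inj]) (auto simp: phiU)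
  define c where "c = a / N"
  have c0: "c \<noteq> 0" unfolding c_def using a0 N0 by simp
  have key: "a / (l + b) = c * phi l + c * cj b" if l: "l \<in> UU" for l
  proof -
    have h: "phi l + cj b = N / (l + b)"
      unfolding phi_def N_def using lb[OF l] by (simp add: field_simps)
    have "c * phi l + c * cj b = c * (phi l + cj b)" by (simp only: distrib_left)
    also have "\<dots> = (a / N) * (N / (l + b))" unfolding h c_def ..
    also have "\<dots> = a / (l + b)" using N0 by simp
    finally show ?thesis by (rule sym)
  qed
  have "xi n a b = (\<Sum>l\<in>UU. ?g (a / (l + b)))" by (simp add: xi_def)
  also have "\<dots> = (\<Sum>l\<in>UU. ?g (c * phi l + c * cj b))" using key by (intro sum.cong) auto
  also have "\<dots> = (\<Sum>e\<in>phi ` UU. ?g (c * e + c * cj b))"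
    by (rule sum.reindex[OF inj, unfolded comp_def, symmetric])
  also have "\<dots> = (\<Sum>e\<in>UU. ?g (c * e + c * cj b))" by (simp only: im)
  also have "\<dots> = (\<Sum>e\<in>UU. ?g (c * e) * ?g (c * cj b))"
  proof (intro sum.cong refl)
    fix e
    have "c * e + c * cj b + cj (c * e + c * cj b) = (c * e + cj (c * e)) + (c * cj b + cj (c * cj b))"
      by (simp only: cj_add add_ac)
    thus "?g (c * e + c * cj b) = ?g (c * e) * ?g (c * cj b)"
      unfolding tr2_T by (simp only: sgn1_T_add[OF Fq_tr Fq_tr])
  qed
  also have "\<dots> = (\<Sum>e\<in>UU. ?g (c * e)) * ?g (c * cj b)" by (simp add: sum_distrib_right)
  also have "(\<Sum>e\<in>UU. ?g (c * e)) = 1 - kloosterman n (c * cj c)" by (rule S_lemma[OF c0])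
  also have "?g (c * cj b) = ?g (cj a * b / (1 + b * cj b))"
  proof -
    have "cj (c * cj b) = cj a * b / N" unfolding c_def by (simp add: cj_mult cj_div cN)
    hence "cj (c * cj b) = cj a * b / (1 + b * cj b)" by (simp only: N_def)
    thus ?thesis using tr2_cj[of "c * cj b"] by simp
  qed
  also have "c * cj c = a * cj a / (1 + b^2 * (cj b)^2)"
  proof -
    have "N * N = 1 + b^2 * (cj b)^2"
      unfolding N_def power2_eq_square[symmetric] frob2 by (simp add: power_mult_distrib)
    thus ?thesis unfolding c_def by (simp add: cj_div cN)
  qed
  finally show ?thesis .
qed

end

theorem lemma5:
  fixes a b :: "'a::{field,finite}" and n :: nat
  assumes card: "card (UNIV :: 'a set) = 2 ^ (2 * n)"
    and a0: "a \<noteq> 0" and b0: "b \<noteq> 0"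
  shows "xi n a b =
    (if b \<in> unitU n \<and> tr n (2 * n) (a * conj2 n b) = 0
       then 1 + sgn1 (tr 1 n (a * conj2 n a)) * 2 ^ n
     else if b \<in> unitU n
       then 1
     else (1 - kloosterman n (a * conj2 n a / (1 + b ^ 2 * (conj2 n b) ^ 2)))
          * sgn1 (tr 1 (2 * n) (conj2 n a * b / (1 + b * conj2 n b))))"
proof -
  interpret gf n "TYPE('a)" by unfold_locales (rule card)
  show ?thesis
  proof (cases "b \<in> unitU n")
    case True
    thus ?thesis using caseU[OF a0 True] unfolding tr_T by simp
  next
    case False
    thus ?thesis using caseNU[OF a0 b0 False] by simp
  qed
qed

end
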